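(* Let $W$ be an sc-Banach space, $E=\mathbb R^n\oplus W$, $C=[0,\infty)^n\oplus W$, and identify $W$ with $\{0\}\oplus W$. Let $N$ be a finite-dimensional subspace of $E$ in good position to $C$, with good complement $N^\perp$, and let $\widetilde N$ be an algebraic complement of $N\cap W$ in $N$, so that $N=\widetilde N\oplus(N\cap W)$ and $E=\widetilde N\oplus(N\cap W)\oplus N^\perp$. Then $\widetilde N$ is in good position to $C$, and $\widetilde N^\perp=(N\cap W)\oplus N^\perp$ is a good complement of $\widetilde N$ in $E$.
   Context: An sc-Banach space is a Banach space $W$ with nested Banach spaces $W=W_0\supset W_1\supset\cdots$, compact inclusions $W_n\to W_m$ ($m<n$), $\bigcap W_m$ dense in each $W_m$; $E$ has levels $\mathbb R^n\oplus W_m$ and $\|\cdot\|$ is its level-$0$ norm. An sc-complement of a closed subspace $N$ is a closed subspace $N^\perp$ with $E_m=(N\cap E_m)\oplus(N^\perp\cap E_m)$ topologically for all $m$, both pieces sc-subspaces. A closed subspace $N$ is in good position to $C$ if $N\cap C$ has nonempty interior in $N$ and there exist an sc-complement $N^\perp$ and a constant $c>0$ such that for every $(n,m)\in N\oplus N^\perp$ with $\|m\|\le c\|n\|$: $n+m\in C$ iff $n\in C$; such an $N^\perp$ is called a good complement of $N$. *)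

theory Defs
  imports "HOL-Analysis.Analysis"
begin

definition sc_banach :: "(nat \<Rightarrow> 'w::banach set) \<Rightarrow> (nat \<Rightarrow> 'w \<Rightarrow> real) \<Rightarrow> bool" where
  "sc_banach W nrm \<longleftrightarrow>
     W 0 = UNIV \<and> (\<forall>x. nrm 0 x = norm x) \<and>
     (\<forall>m. subspace (W m)) \<and>
     (\<forall>m. \<forall>x\<in>W m. \<forall>y\<in>W m. nrm m (x + y) \<le> nrm m x + nrm m y) \<and>
     (\<forall>m. \<forall>x\<in>W m. \<forall>r. nrm m (r *\<^sub>R x) = \<bar>r\<bar> * nrm m x) \<and>
     (\<forall>m. \<forall>x\<in>W m. nrm m x = 0 \<longrightarrow> x = 0) \<and>
     (\<forall>m s. (\<forall>k. s k \<in> W m) \<and>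
            (\<forall>e>0. \<exists>K. \<forall>i\<ge>K. \<forall>j\<ge>K. nrm m (s i - s j) < e)
            \<longrightarrow> (\<exists>l\<in>W m. (\<lambda>k. nrm m (s k - l)) \<longlonglongrightarrow> 0)) \<and>
     (\<forall>m. W (Suc m) \<subseteq> W m) \<and>
     (\<forall>m n. m < n \<longrightarrow>
        (\<forall>s. (\<forall>k. s k \<in> W n) \<and> bounded (range (\<lambda>k. nrm n (s k))) \<longrightarrow>
             (\<exists>(r::nat\<Rightarrow>nat) l. strict_mono r \<and> l \<in> W m \<and> (\<lambda>k. nrm m (s (r k) - l)) \<longlonglongrightarrow> 0))) \<and>
     (\<forall>m. \<forall>x\<in>W m. \<forall>e>0. \<exists>y\<in>(\<Inter>k. W k). nrm m (x - y) < e)"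

text \<open>Levels of E = R^n (+) W and their norms (level 0 norm = the product norm).\<close>
definition Elev :: "(nat \<Rightarrow> 'w set) \<Rightarrow> nat \<Rightarrow> ((real^'n) \<times> 'w) set" where
  "Elev W m = {x. snd x \<in> W m}"

definition lnorm :: "(nat \<Rightarrow> 'w \<Rightarrow> real) \<Rightarrow> nat \<Rightarrow> (real^'n) \<times> 'w \<Rightarrow> real" where
  "lnorm nrm m x = sqrt ((norm (fst x))\<^sup>2 + (nrm m (snd x))\<^sup>2)"

definition Cq :: "((real^'n) \<times> 'w) set" where
  "Cq = {x. \<forall>i. 0 \<le> fst x $ i}"

definition Wsub :: "((real^'n) \<times> 'w) set" where
  "Wsub = {x. fst x = 0}"

text \<open>sc-subspace: closed linear subspace F such that F_m = F \<inter> E_m makes F an sc-Banach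
  space, i.e. F_m is closed in E_m and F_\<infinity> is dense in each F_m.\<close>
definition sc_subspace :: "(nat \<Rightarrow> 'w::banach set) \<Rightarrow> (nat \<Rightarrow> 'w \<Rightarrow> real)
    \<Rightarrow> ((real^'n) \<times> 'w) set \<Rightarrow> bool" where
  "sc_subspace W nrm F \<longleftrightarrow>
     subspace F \<and> closed F \<and>
     (\<forall>m s l. (\<forall>k. s k \<in> F \<inter> Elev W m) \<and> l \<in> Elev W m \<and>
              (\<lambda>k. lnorm nrm m (s k - l)) \<longlonglongrightarrow> 0 \<longrightarrow> l \<in> F) \<and>
     (\<forall>m. \<forall>x\<in>F \<inter> Elev W m. \<forall>e>0. \<exists>y\<in>F \<inter> (\<Inter>k. Elev W k). lnorm nrm m (x - y) < e)"

text \<open>sc-complement M of N: E_m = (N \<inter> E_m) (+) (M \<inter> E_m) topologically for all m.\<close>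
definition sc_complement :: "(nat \<Rightarrow> 'w::banach set) \<Rightarrow> (nat \<Rightarrow> 'w \<Rightarrow> real)
    \<Rightarrow> ((real^'n) \<times> 'w) set \<Rightarrow> ((real^'n) \<times> 'w) set \<Rightarrow> bool" where
  "sc_complement W nrm N M \<longleftrightarrow>
     sc_subspace W nrm N \<and> sc_subspace W nrm M \<and> N \<inter> M = {0} \<and>
     (\<forall>m. \<forall>x\<in>Elev W m. \<exists>a\<in>N \<inter> Elev W m. \<exists>b\<in>M \<inter> Elev W m. x = a + b) \<and>
     (\<forall>m. \<exists>K. \<forall>a\<in>N \<inter> Elev W m. \<forall>b\<in>M \<inter> Elev W m.
            lnorm nrm m a \<le> K * lnorm nrm m (a + b))"

definition good_complement :: "(nat \<Rightarrow> 'w::banach set) \<Rightarrow> (nat \<Rightarrow> 'w \<Rightarrow> real)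
    \<Rightarrow> ((real^'n) \<times> 'w) set \<Rightarrow> ((real^'n) \<times> 'w) set \<Rightarrow> bool" where
  "good_complement W nrm N M \<longleftrightarrow>
     sc_complement W nrm N M \<and>
     (\<exists>c>0. \<forall>n\<in>N. \<forall>m\<in>M. norm m \<le> c * norm n \<longrightarrow> (n + m \<in> Cq \<longleftrightarrow> n \<in> Cq))"

definition good_position :: "(nat \<Rightarrow> 'w::banach set) \<Rightarrow> (nat \<Rightarrow> 'w \<Rightarrow> real)
    \<Rightarrow> ((real^'n) \<times> 'w) set \<Rightarrow> bool" where
  "good_position W nrm N \<longleftrightarrow>
     (\<exists>U. openin (top_of_set N) U \<and> U \<noteq> {} \<and> U \<subseteq> N \<inter> Cq) \<and>
     (\<exists>M. good_complement W nrm N M)"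

end

theory Submission
  imports Defs
begin


lemma claim1:
  fixes b u :: "'a::real_normed_vector"
  assumes "u \<in> S" "subspace S"
  shows "\<bar>t\<bar> * infdist b S \<le> norm (t *\<^sub>R b + u)"
proof (cases "t = 0")
  case True then show ?thesis by simp
next
  case False
  have "- (1/t) *\<^sub>R u \<in> S" using assms by (simp add: subspace_scale subspace_neg)
  then have "infdist b S \<le> dist b (- (1/t) *\<^sub>R u)" by (rule infdist_le)
  also have "\<dots> = norm (b + (1/t) *\<^sub>R u)" by (simp add: dist_norm)
  finally have "\<bar>t\<bar> * infdist b S \<le> \<bar>t\<bar> * norm (b + (1/t) *\<^sub>R u)"
    by (simp add: mult_left_mono)
  also have "\<dots> = norm (t *\<^sub>R (b + (1/t) *\<^sub>R u))" by simp
  also have "t *\<^sub>R (b + (1/t) *\<^sub>R u) = t *\<^sub>R b + u" using False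
    by (simp add: scaleR_add_right)
  finally show ?thesis .
qed

lemma fin_closed:
  fixes B :: "'a::real_normed_vector set"
  assumes "finite B"
  shows "closed (span B)"
  using assms
proof (induction B rule: finite_induct)
  case empty then show ?case by simp
next
  case (insert b B0)
  show ?case
  proof (cases "b \<in> span B0")
    case True then show ?thesis using insert by (simp add: span_redundant)
  next
    case False
    define d where "d = infdist b (span B0)"
    have dpos: "d > 0" unfolding d_def
      using infdist_pos_not_in_closed[OF insert.IH _ False] span_zero by blast
    show ?thesis unfolding closed_sequential_limits
    proof (intro allI impI, elim conjE)
      fix s l assume s: "\<forall>n. s n \<in> span (insert b B0)" and lim: "s \<longlonglongrightarrow> l"
      have "\<forall>n. \<exists>k. s n - k *\<^sub>R b \<in> span B0" using s by (simp add: span_breakdown_eq)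
      then obtain t where t: "\<And>n. s n - t n *\<^sub>R b \<in> span B0" by metis
      have bnd: "\<bar>t i - t j\<bar> \<le> norm (s i - s j) / d" for i j
      proof -
        have "\<bar>t i - t j\<bar> * d \<le> norm ((t i - t j) *\<^sub>R b + ((s i - t i *\<^sub>R b) - (s j - t j *\<^sub>R b)))"
          unfolding d_def using claim1 span_diff[OF t t] subspace_span by blast
        also have "(t i - t j) *\<^sub>R b + ((s i - t i *\<^sub>R b) - (s j - t j *\<^sub>R b)) = s i - s j"
          by (simp add: algebra_simps)
        finally show ?thesis using dpos by (simp add: pos_le_divide_eq)
      qed
      have "Cauchy s" using lim by (rule LIMSEQ_imp_Cauchy)
      have "Cauchy t"
      proof (rule metric_CauchyI)
        fix e :: real assume "e > 0"
        then have "e * d > 0" using dpos by simp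
        from metric_CauchyD[OF \<open>Cauchy s\<close> this] obtain M where
          M: "\<forall>m\<ge>M. \<forall>n\<ge>M. dist (s m) (s n) < e * d" by blast
        show "\<exists>M. \<forall>m\<ge>M. \<forall>n\<ge>M. dist (t m) (t n) < e"
        proof (intro exI allI impI)
          fix m n assume mn: "m \<ge> M" "n \<ge> M"
          have "norm (s m - s n) < e * d" using M mn by (metis dist_norm)
          then have "norm (s m - s n) / d < e" by (metis dpos pos_divide_less_eq)
          then show "dist (t m) (t n) < e" using bnd[of m n] unfolding dist_real_def by linarith
        qed
      qed
      then obtain t0 where t0: "t \<longlonglongrightarrow> t0" using Cauchy_convergent convergent_def by blast
      have "(\<lambda>n. s n - t n *\<^sub>R b) \<longlonglongrightarrow> l - t0 *\<^sub>R b"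
        by (intro tendsto_diff tendsto_scaleR lim t0 tendsto_const)
      then have "l - t0 *\<^sub>R b \<in> span B0"
        by (rule closed_sequentially[OF insert.IH, rotated]) (rule t)
      then show "l \<in> span (insert b B0)" by (auto simp: span_breakdown_eq)
    qed
  qed
qed

lemma fin_bound:
  fixes f :: "'a::real_vector \<Rightarrow> 'b::real_normed_vector" and p :: "'a \<Rightarrow> real"
  assumes "finite B" "linear f" "inj_on f (span B)"
    "\<And>x y. x \<in> span B \<Longrightarrow> y \<in> span B \<Longrightarrow> p (x + y) \<le> p x + p y"
    "\<And>x r. x \<in> span B \<Longrightarrow> p (r *\<^sub>R x) = \<bar>r\<bar> * p x"
  shows "\<exists>K\<ge>0. \<forall>x\<in>span B. p x \<le> K * norm (f x)"
  using assms(1,3-5)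
proof (induction B rule: finite_induct)
  case empty
  have "p 0 = 0" using empty.prems(3)[of 0 0] by (simp add: span_zero)
  then show ?case by (intro exI[of _ 0]) auto
next
  case (insert b B0)
  have sub: "span B0 \<subseteq> span (insert b B0)" by (simp add: span_mono subset_insertI)
  have "\<exists>K\<ge>0. \<forall>x\<in>span B0. p x \<le> K * norm (f x)"
    apply (rule insert.IH)
    using insert.prems sub apply (auto intro: inj_on_subset)[1]
    using insert.prems sub by blast+
  then obtain K0 where K0: "K0 \<ge> 0" "\<And>x. x \<in> span B0 \<Longrightarrow> p x \<le> K0 * norm (f x)" by blast
  show ?case
  proof (cases "b \<in> span B0")
    case True then show ?thesis using K0 by (auto simp: span_redundant)
  next
    case False
    have bin: "b \<in> span (insert b B0)" by (simp add: span_base)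
    have fimg: "span (f ` B0) = f ` span B0" using assms(2) by (rule span_linear_image)
    have fbn: "f b \<notin> span (f ` B0)"
    proof
      assume "f b \<in> span (f ` B0)"
      then obtain u where u: "u \<in> span B0" "f b = f u" using fimg by auto
      then have "b = u" using insert.prems(1) bin sub by (auto dest: inj_onD)
      then show False using False u by simp
    qed
    have clo: "closed (span (f ` B0))" using insert.hyps by (simp add: fin_closed)
    define d where "d = infdist (f b) (span (f ` B0))"
    have dpos: "d > 0" unfolding d_def
      using infdist_pos_not_in_closed[OF clo _ fbn] span_zero by blast
    define K where "K = \<bar>p b\<bar> / d + K0 * (1 + norm (f b) / d)"
    have "K \<ge> 0" unfolding K_def using dpos K0 by simp
    moreover have "p x \<le> K * norm (f x)" if x: "x \<in> span (insert b B0)" for x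
    proof -
      obtain t where t: "x - t *\<^sub>R b \<in> span B0" using x by (auto simp: span_breakdown_eq)
      define u where "u = x - t *\<^sub>R b"
      have xe: "x = t *\<^sub>R b + u" unfolding u_def by simp
      have fx: "f x = t *\<^sub>R f b + f u" unfolding xe using assms(2)
        by (simp add: linear_add linear_scale)
      have fu: "f u \<in> span (f ` B0)" using fimg t u_def by auto
      have c1: "\<bar>t\<bar> * d \<le> norm (f x)" unfolding fx d_def
        by (rule claim1[OF fu subspace_span])
      have c1': "\<bar>t\<bar> \<le> norm (f x) / d" using c1 dpos by (simp add: pos_le_divide_eq)
      have "norm (f u) \<le> norm (f x) + \<bar>t\<bar> * norm (f b)"
      proof -
        have "f u = f x - t *\<^sub>R f b" using fx by simp
        then have "norm (f u) \<le> norm (f x) + norm (t *\<^sub>R f b)" by (metis norm_triangle_ineq4)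
        then show ?thesis by simp
      qed
      also have "\<dots> \<le> norm (f x) + (norm (f x) / d) * norm (f b)"
        using mult_right_mono[OF c1' norm_ge_zero[of "f b"]] by simp
      finally have nu: "norm (f u) \<le> norm (f x) * (1 + norm (f b) / d)" by (simp add: algebra_simps)
      have uin: "u \<in> span (insert b B0)" using t sub u_def by auto
      have tbin: "t *\<^sub>R b \<in> span (insert b B0)" using bin by (simp add: span_scale)
      have "p x \<le> p (t *\<^sub>R b) + p u" unfolding xe using insert.prems(2)[OF tbin uin] .
      also have "p (t *\<^sub>R b) = \<bar>t\<bar> * p b" using insert.prems(3)[OF bin] .
      also have "\<bar>t\<bar> * p b \<le> (norm (f x) / d) * \<bar>p b\<bar>"
        using c1' by (metis abs_ge_self abs_ge_zero mult_mono' order_trans mult.commute mult_left_mono)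
      also have "p u \<le> K0 * norm (f u)" using K0(2) t u_def by simp
      also have "K0 * norm (f u) \<le> K0 * (norm (f x) * (1 + norm (f b) / d))"
        using nu K0(1) by (simp add: mult_left_mono)
      finally show ?thesis unfolding K_def using dpos by (simp add: algebra_simps)
    qed
    ultimately show ?thesis by blast
  qed
qed

lemma fin_sub:
  fixes S :: "'a::real_vector set"
  assumes "subspace S" "S \<subseteq> span B" "finite B"
  shows "\<exists>B'. finite B' \<and> S = span B'"
proof -
  obtain B' where B': "B' \<subseteq> S" "independent B'" "S \<subseteq> span B'"
    by (rule basis_exists[of S]) 
  have "finite B'" using independent_span_bound[OF assms(3) B'(2)] B'(1) assms(2) by blast
  moreover have "span B' \<subseteq> S" using B'(1) assms(1) by (simp add: span_minimal)
  ultimately show ?thesis using B'(3) by blast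
qed



lemma scb:
  assumes "sc_banach W nrm"
  shows "W 0 = UNIV" "\<And>x. nrm 0 x = norm x" "\<And>m. subspace (W m)"
    "\<And>m x y. x \<in> W m \<Longrightarrow> y \<in> W m \<Longrightarrow> nrm m (x + y) \<le> nrm m x + nrm m y"
    "\<And>m x r. x \<in> W m \<Longrightarrow> nrm m (r *\<^sub>R x) = \<bar>r\<bar> * nrm m x"
    "\<And>m x. x \<in> W m \<Longrightarrow> nrm m x = 0 \<Longrightarrow> x = 0"
proof -
  note a = assms[unfolded sc_banach_def]
  show "W 0 = UNIV" using a by (elim conjE)
  show "\<And>x. nrm 0 x = norm x" using a by (elim conjE) blast
  show "\<And>m. subspace (W m)" using a by (elim conjE) blast
  show "\<And>m x y. x \<in> W m \<Longrightarrow> y \<in> W m \<Longrightarrow> nrm m (x + y) \<le> nrm m x + nrm m y" using a by (elim conjE) blast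
  show "\<And>m x r. x \<in> W m \<Longrightarrow> nrm m (r *\<^sub>R x) = \<bar>r\<bar> * nrm m x" using a by (elim conjE) blast
  show "\<And>m x. x \<in> W m \<Longrightarrow> nrm m x = 0 \<Longrightarrow> x = 0" using a by (elim conjE) blast
qed

lemma nrm_nonneg:
  assumes "sc_banach W nrm" "x \<in> W m"
  shows "0 \<le> nrm m x"
proof -
  have s: "subspace (W m)" by (rule scb(3)[OF assms(1)])
  have mx: "(-1) *\<^sub>R x \<in> W m" using s assms(2) by (simp add: subspace_scale subspace_neg)
  have "nrm m (x + (-1) *\<^sub>R x) \<le> nrm m x + nrm m ((-1) *\<^sub>R x)"
    by (rule scb(4)[OF assms(1) assms(2) mx])
  moreover have "nrm m ((-1) *\<^sub>R x) = nrm m x" using scb(5)[OF assms(1) assms(2), of "-1"] by simp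
  moreover have "nrm m (x + (-1) *\<^sub>R x) = 0"
  proof -
    have "x + (-1) *\<^sub>R x = 0 *\<^sub>R x" by simp
    then show ?thesis using scb(5)[OF assms(1) assms(2), of 0] by simp
  qed
  ultimately show ?thesis by simp
qed

lemma Elev_subspace: "sc_banach W nrm \<Longrightarrow> subspace (Elev W m)"
  using scb(3)[of W nrm m] unfolding Elev_def subspace_def by auto

lemma lnorm_ge0: "0 \<le> lnorm nrm m x"
  unfolding lnorm_def by simp

lemma lnorm_fst: "norm (fst x) \<le> lnorm nrm m x"
  unfolding lnorm_def by (simp add: real_le_rsqrt)

lemma lnorm0: "sc_banach W nrm \<Longrightarrow> lnorm nrm 0 x = norm x"
  unfolding lnorm_def using scb(2)[of W nrm] by (simp add: norm_prod_def)

lemma lnorm_scale: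
  assumes "sc_banach W nrm" "x \<in> Elev W m"
  shows "lnorm nrm m (r *\<^sub>R x) = \<bar>r\<bar> * lnorm nrm m x"
proof -
  have "snd x \<in> W m" using assms(2) by (simp add: Elev_def)
  then have e: "nrm m (r *\<^sub>R snd x) = \<bar>r\<bar> * nrm m (snd x)" using scb(5)[OF assms(1)] by blast
  have "lnorm nrm m (r *\<^sub>R x) = sqrt ((\<bar>r\<bar> * norm (fst x))\<^sup>2 + (\<bar>r\<bar> * nrm m (snd x))\<^sup>2)"
    unfolding lnorm_def using e by simp
  also have "\<dots> = sqrt (r\<^sup>2 * ((norm (fst x))\<^sup>2 + (nrm m (snd x))\<^sup>2))"
    by (simp only: power_mult_distrib distrib_left power2_abs)
  also have "\<dots> = \<bar>r\<bar> * lnorm nrm m x" unfolding lnorm_def by (simp add: real_sqrt_mult)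
  finally show ?thesis .
qed

lemma lnorm_minus:
  assumes "sc_banach W nrm" "x \<in> Elev W m" "y \<in> Elev W m"
  shows "lnorm nrm m (x - y) = lnorm nrm m (y - x)"
proof -
  have "y - x \<in> Elev W m" by (rule subspace_diff[OF Elev_subspace[OF assms(1)] assms(3) assms(2)])
  then have h: "lnorm nrm m ((-1) *\<^sub>R (y - x)) = \<bar>-1\<bar> * lnorm nrm m (y - x)" by (rule lnorm_scale[OF assms(1)])
  have eq: "(-1) *\<^sub>R (y - x) = x - y" by simp
  show ?thesis using h unfolding eq by (metis abs_neg_one mult_1)
qed

lemma lnorm_tri:
  assumes "sc_banach W nrm" "x \<in> Elev W m" "y \<in> Elev W m"
  shows "lnorm nrm m (x + y) \<le> lnorm nrm m x + lnorm nrm m y"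
proof -
  have sx: "snd x \<in> W m" and sy: "snd y \<in> W m" using assms(2,3) by (auto simp: Elev_def)
  have sxy: "snd x + snd y \<in> W m" using sx sy scb(3)[OF assms(1)] by (simp add: subspace_add)
  define a1 where "a1 = norm (fst x)"
  define a2 where "a2 = norm (fst y)"
  define b1 where "b1 = nrm m (snd x)"
  define b2 where "b2 = nrm m (snd y)"
  define A where "A = norm (fst x + fst y)"
  define B where "B = nrm m (snd x + snd y)"
  have A: "0 \<le> A" "A \<le> a1 + a2" unfolding A_def a1_def a2_def by (simp_all add: norm_triangle_ineq)
  have B: "0 \<le> B" "B \<le> b1 + b2" unfolding B_def b1_def b2_def
    using nrm_nonneg[OF assms(1) sxy] scb(4)[OF assms(1) sx sy] by auto
  have "lnorm nrm m (x + y) = sqrt (A\<^sup>2 + B\<^sup>2)" unfolding lnorm_def A_def B_def by simp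
  also have "\<dots> \<le> sqrt ((a1 + a2)\<^sup>2 + (b1 + b2)\<^sup>2)"
    using A B by (intro real_sqrt_le_mono add_mono power_mono) auto
  also have "\<dots> = norm ((a1, b1) + (a2, b2) :: real \<times> real)" by (simp add: norm_prod_def)
  also have "\<dots> \<le> norm ((a1, b1) :: real \<times> real) + norm ((a2, b2) :: real \<times> real)"
    by (rule norm_triangle_ineq)
  also have "\<dots> = lnorm nrm m x + lnorm nrm m y"
    unfolding lnorm_def a1_def a2_def b1_def b2_def by (simp add: norm_prod_def)
  finally show ?thesis .
qed

lemma lnorm_zero:
  assumes "sc_banach W nrm" "x \<in> Elev W m" "lnorm nrm m x \<le> 0"
  shows "x = 0"
proof -
  have sx: "snd x \<in> W m" using assms(2) by (simp add: Elev_def)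
  have "(norm (fst x))\<^sup>2 + (nrm m (snd x))\<^sup>2 = 0"
    using assms(3) lnorm_ge0[of nrm m x] unfolding lnorm_def
    by (metis add_nonneg_nonneg antisym real_sqrt_eq_zero_cancel_iff zero_le_power2)
  then have "norm (fst x) = 0" "nrm m (snd x) = 0"
    by (simp_all add: add_nonneg_eq_0_iff)
  then have "fst x = 0" "snd x = 0" using scb(6)[OF assms(1) sx] by auto
  then show ?thesis by (simp add: prod_eq_iff)
qed

lemma le_lim0:
  fixes f :: "nat \<Rightarrow> real"
  assumes "\<And>k. a \<le> C * f k" "f \<longlonglongrightarrow> 0"
  shows "a \<le> 0"
proof -
  have "(\<lambda>k. C * f k) \<longlonglongrightarrow> C * 0" by (intro tendsto_mult tendsto_const assms(2))
  then show ?thesis using assms(1) by (intro LIMSEQ_le_const[of "\<lambda>k. C * f k"]) auto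
qed

lemma Cq_fst: "fst x = fst y \<Longrightarrow> (x \<in> Cq \<longleftrightarrow> y \<in> Cq)"
  unfolding Cq_def by simp

lemma subspace_Wsub: "subspace Wsub"
  unfolding subspace_def Wsub_def by simp

lemma closed_from_lev:
  assumes "sc_banach W nrm"
    "\<forall>s l. (\<forall>k. s k \<in> F \<inter> Elev W 0) \<and> l \<in> Elev W 0 \<and> (\<lambda>k. lnorm nrm 0 (s k - l)) \<longlonglongrightarrow> 0 \<longrightarrow> l \<in> F"
  shows "closed F"
  unfolding closed_sequential_limits
proof (intro allI impI, elim conjE)
  fix s l assume s: "\<forall>n. s n \<in> F" and lim: "s \<longlonglongrightarrow> l"
  have "(\<lambda>k. norm (s k - l)) \<longlonglongrightarrow> 0"
    using lim by (simp add: tendsto_norm_zero_iff LIM_zero_iff)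
  then have "(\<lambda>k. lnorm nrm 0 (s k - l)) \<longlonglongrightarrow> 0" by (simp only: lnorm0[OF assms(1)])
  moreover have "Elev W 0 = UNIV" using scb(1)[OF assms(1)] by (simp add: Elev_def)
  ultimately show "l \<in> F" using assms(2) s by blast
qed



theorem lemma6p7:
  fixes W :: "nat \<Rightarrow> 'w::banach set" and nrm :: "nat \<Rightarrow> 'w \<Rightarrow> real"
    and N Nperp Nt :: "((real^'n) \<times> 'w) set"
  assumes "sc_banach W nrm"
    and "subspace N" and "\<exists>B. finite B \<and> N = span B"
    and "good_position W nrm N"
    and "good_complement W nrm N Nperp"
    and "subspace Nt" and "Nt \<subseteq> N" and "Nt \<inter> (N \<inter> Wsub) = {0}"
    and "{a + b | a b. a \<in> Nt \<and> b \<in> N \<inter> Wsub} = N"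
  shows "good_position W nrm Nt \<and>
         good_complement W nrm Nt {a + b | a b. a \<in> N \<inter> Wsub \<and> b \<in> Nperp}"
proof -
  note sc = assms(1) and subN = assms(2) and gpN = assms(4) and gc = assms(5)
    and subNt = assms(6) and NtN = assms(7) and disj = assms(8) and decN = assms(9)
  obtain B where B: "finite B" "N = span B" using assms(3) by blast
  define WN where "WN = N \<inter> Wsub"
  define M where "M = {a + b | a b. a \<in> WN \<and> b \<in> Nperp}"
  have Elev0: "Elev W 0 = UNIV" using scb(1)[OF sc] by (simp add: Elev_def)
  have Esub: "\<And>m. subspace (Elev W m)" using Elev_subspace[OF sc] .
  have lz: "\<And>m. lnorm nrm m 0 = 0"
    using lnorm_scale[OF sc subspace_0[OF Esub], of _ 0] by simp
  have Ediff: "\<And>m x y. x \<in> Elev W m \<Longrightarrow> y \<in> Elev W m \<Longrightarrow> x - y \<in> Elev W m"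
    by (rule subspace_diff[OF Esub])
  have Eadd: "\<And>m x y. x \<in> Elev W m \<Longrightarrow> y \<in> Elev W m \<Longrightarrow> x + y \<in> Elev W m"
    by (rule subspace_add[OF Esub])
  have subWN: "subspace WN" unfolding WN_def using subN subspace_Wsub by (rule subspace_inter)
  have scN: "sc_subspace W nrm N" and scP: "sc_subspace W nrm Nperp" and NP0: "N \<inter> Nperp = {0}"
    and decm: "\<And>m x. x \<in> Elev W m \<Longrightarrow> \<exists>a\<in>N \<inter> Elev W m. \<exists>b\<in>Nperp \<inter> Elev W m. x = a + b"
    and bndNP: "\<And>m. \<exists>K. \<forall>a\<in>N \<inter> Elev W m. \<forall>b\<in>Nperp \<inter> Elev W m.
            lnorm nrm m a \<le> K * lnorm nrm m (a + b)"
    using gc unfolding good_complement_def sc_complement_def by blast+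
  obtain c where c: "c > 0" and cC: "\<And>n m. n \<in> N \<Longrightarrow> m \<in> Nperp \<Longrightarrow> norm m \<le> c * norm n \<Longrightarrow> (n + m \<in> Cq \<longleftrightarrow> n \<in> Cq)"
    using gc unfolding good_complement_def by blast
  have subP: "subspace Nperp" using scP unfolding sc_subspace_def by blast
  have Nclos: "\<And>m s l. (\<forall>k. s k \<in> N \<inter> Elev W m) \<Longrightarrow> l \<in> Elev W m \<Longrightarrow>
              (\<lambda>k. lnorm nrm m (s k - l)) \<longlonglongrightarrow> 0 \<Longrightarrow> l \<in> N"
    using scN unfolding sc_subspace_def by blast
  have Pdens: "\<And>m x e. x \<in> Nperp \<inter> Elev W m \<Longrightarrow> e > 0 \<Longrightarrow> \<exists>y\<in>Nperp \<inter> (\<Inter>k. Elev W k). lnorm nrm m (x - y) < e"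
    using scP unfolding sc_subspace_def by blast
  have Ndens: "\<And>m x e. x \<in> N \<inter> Elev W m \<Longrightarrow> e > 0 \<Longrightarrow> \<exists>y\<in>N \<inter> (\<Inter>k. Elev W k). lnorm nrm m (x - y) < e"
    using scN unfolding sc_subspace_def by blast

  have NE: "N \<subseteq> (\<Inter>k. Elev W k)"
  proof -
    define S where "S = N \<inter> (\<Inter>k. Elev W k)"
    have "subspace (\<Inter>k. Elev W k)" unfolding subspace_def
      by (blast intro: subspace_0[OF Esub] subspace_add[OF Esub] subspace_scale[OF Esub])
    then have subS: "subspace S" unfolding S_def using subN by (intro subspace_inter)
    obtain B' where "finite B'" "S = span B'" using fin_sub[OF subS _ B(1)] B(2) S_def by blast
    then have clS: "closed S" by (simp add: fin_closed)
    have "x \<in> S" if x: "x \<in> N" for x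
    proof -
      have "x \<in> closure S" unfolding closure_approachable
      proof (intro allI impI)
        fix e :: real assume "e > 0"
        then obtain y where "y \<in> S" "lnorm nrm 0 (x - y) < e"
          using Ndens[of x 0 e] x Elev0 \<open>e > 0\<close> unfolding S_def by blast
        moreover have "lnorm nrm 0 (x - y) = dist y x" by (simp only: lnorm0[OF sc] dist_norm norm_minus_commute)
        ultimately show "\<exists>y\<in>S. dist y x < e" by auto
      qed
      then show ?thesis using clS by simp
    qed
    then show ?thesis unfolding S_def by blast
  qed
  have NEm: "\<And>m. N \<subseteq> Elev W m" using NE by blast
  have NtE: "\<And>m. Nt \<subseteq> Elev W m" using NEm NtN by blast

  have decN': "\<And>x. x \<in> N \<Longrightarrow> \<exists>t\<in>Nt. \<exists>w\<in>WN. x = t + w"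
    using decN unfolding WN_def by blast
  have WNfst: "\<And>w. w \<in> WN \<Longrightarrow> fst w = 0" unfolding WN_def Wsub_def by simp

  obtain Bt where Bt: "finite Bt" "Nt = span Bt" using fin_sub[OF subNt _ B(1)] NtN B(2) by blast
  have injfst: "inj_on fst Nt"
  proof (rule inj_onI)
    fix x y assume xy: "x \<in> Nt" "y \<in> Nt" "fst x = fst y"
    have d: "x - y \<in> Nt" using subNt xy by (simp add: subspace_diff)
    moreover have "x - y \<in> N \<inter> Wsub" using NtN d xy(3) by (auto simp: Wsub_def)
    ultimately have "x - y = 0" using disj by blast
    then show "x = y" by simp
  qed
  have F3: "\<And>m. \<exists>K\<ge>0. \<forall>t\<in>Nt. lnorm nrm m t \<le> K * norm (fst t)"
  proof -
    fix m
    have "\<exists>K\<ge>0. \<forall>x\<in>span Bt. lnorm nrm m x \<le> K * norm (fst x)"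
    proof (rule fin_bound[OF Bt(1)])
      show "linear fst" by (rule linear_fst)
      show "inj_on fst (span Bt)" using injfst Bt(2) by simp
      show "\<And>x y. x \<in> span Bt \<Longrightarrow> y \<in> span Bt \<Longrightarrow> lnorm nrm m (x + y) \<le> lnorm nrm m x + lnorm nrm m y"
        using lnorm_tri[OF sc] NtE Bt(2) by blast
      show "\<And>x r. x \<in> span Bt \<Longrightarrow> lnorm nrm m (r *\<^sub>R x) = \<bar>r\<bar> * lnorm nrm m x"
        using lnorm_scale[OF sc] NtE Bt(2) by blast
    qed
    then show "\<exists>K\<ge>0. \<forall>t\<in>Nt. lnorm nrm m t \<le> K * norm (fst t)" using Bt(2) by simp
  qed

  have Ntclos: "l \<in> Nt" if s: "\<forall>k. s k \<in> Nt \<inter> Elev W m" and l: "l \<in> Elev W m"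
      and lim: "(\<lambda>k. lnorm nrm m (s k - l)) \<longlonglongrightarrow> 0" for m s l
  proof -
    have "l \<in> N" using Nclos[of s m l] s l lim NtN by blast
    then obtain t w where tw: "t \<in> Nt" "w \<in> WN" "l = t + w" using decN' by blast
    obtain K where K: "K \<ge> 0" "\<And>t. t \<in> Nt \<Longrightarrow> lnorm nrm m t \<le> K * norm (fst t)" using F3 by blast
    have wE: "w \<in> Elev W m" using tw NEm WN_def by blast
    have tE: "t \<in> Elev W m" using tw NtE by blast
    have "lnorm nrm m w \<le> (1 + K) * lnorm nrm m (s k - l)" for k
    proof -
      have skE: "s k \<in> Elev W m" and skN: "s k \<in> Nt" using s by auto
      have a: "s k - t \<in> Nt" using subNt skN tw(1) by (simp add: subspace_diff)
      have "lnorm nrm m (s k - t) \<le> K * norm (fst (s k - t))" using K(2)[OF a] .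
      also have "fst (s k - t) = fst (s k - l)" using tw WNfst by simp
      also have "K * norm (fst (s k - l)) \<le> K * lnorm nrm m (s k - l)"
        by (rule mult_left_mono[OF lnorm_fst K(1)])
      finally have b: "lnorm nrm m (s k - t) \<le> K * lnorm nrm m (s k - l)" .
      have "w = (l - s k) + (s k - t)" using tw by simp
      then have "lnorm nrm m w = lnorm nrm m ((l - s k) + (s k - t))" by simp
      also have "\<dots> \<le> lnorm nrm m (l - s k) + lnorm nrm m (s k - t)"
        using l skE tE by (intro lnorm_tri[OF sc] Ediff)
      also have "lnorm nrm m (l - s k) = lnorm nrm m (s k - l)" using lnorm_minus[OF sc l skE] .
      finally show ?thesis using b by (simp add: algebra_simps)
    qed
    then have "lnorm nrm m w \<le> 0" using lim by (rule le_lim0)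
    then have "w = 0" using lnorm_zero[OF sc wE] by simp
    then show ?thesis using tw by simp
  qed

  have scNt: "sc_subspace W nrm Nt"
    unfolding sc_subspace_def
  proof (intro conjI allI impI ballI)
    show "subspace Nt" by (rule subNt)
    show "closed Nt" using closed_from_lev[OF sc] Ntclos by blast
    show "\<And>m s l. (\<forall>k. s k \<in> Nt \<inter> Elev W m) \<and> l \<in> Elev W m \<and> (\<lambda>k. lnorm nrm m (s k - l)) \<longlonglongrightarrow> 0 \<Longrightarrow> l \<in> Nt"
      using Ntclos by blast
    fix m x and e :: real assume "x \<in> Nt \<inter> Elev W m" "e > 0"
    then show "\<exists>y\<in>Nt \<inter> (\<Inter>k. Elev W k). lnorm nrm m (x - y) < e"
      using NtE by (intro bexI[of _ x]) (auto simp add: lz)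
  qed

  have subM: "subspace M" unfolding M_def using subWN subP by (rule subspace_sums)
  have Mclos: "l \<in> M" if s: "\<forall>k. s k \<in> M \<inter> Elev W m" and l: "l \<in> Elev W m"
      and lim: "(\<lambda>k. lnorm nrm m (s k - l)) \<longlonglongrightarrow> 0" for m s l
  proof -
    have "\<forall>k. \<exists>w p. w \<in> WN \<and> p \<in> Nperp \<and> s k = w + p" using s unfolding M_def by blast
    then obtain w p where wp: "\<And>k. w k \<in> WN" "\<And>k. p k \<in> Nperp" "\<And>k. s k = w k + p k" by metis
    obtain a b where ab: "a \<in> N" "a \<in> Elev W m" "b \<in> Nperp" "b \<in> Elev W m" "l = a + b"
      using decm[OF l] by blast
    obtain K where K: "\<forall>a\<in>N \<inter> Elev W m. \<forall>b\<in>Nperp \<inter> Elev W m. lnorm nrm m a \<le> K * lnorm nrm m (a + b)"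
      using bndNP by blast
    have "norm (fst a) \<le> \<bar>K\<bar> * lnorm nrm m (s k - l)" for k
    proof -
      have wk: "w k \<in> N" "w k \<in> Elev W m" using wp(1) NEm WN_def by auto
      have skE: "s k \<in> Elev W m" using s by auto
      have pk: "p k \<in> Elev W m" using wp(3)[of k] skE wk(2) Ediff
        by (metis add_diff_cancel_left')
      have a1: "w k - a \<in> N \<inter> Elev W m" using wk ab subN Ediff by (simp add: subspace_diff)
      have a2: "p k - b \<in> Nperp \<inter> Elev W m" using wp(2) pk ab subP Ediff by (simp add: subspace_diff)
      have "norm (fst a) = norm (fst (w k - a))" using WNfst[OF wp(1)] by simp
      also have "\<dots> \<le> lnorm nrm m (w k - a)" by (rule lnorm_fst)
      also have "\<dots> \<le> K * lnorm nrm m ((w k - a) + (p k - b))" using K a1 a2 by blast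
      also have "(w k - a) + (p k - b) = s k - l" using wp(3) ab(5) by simp
      also have "K * lnorm nrm m (s k - l) \<le> \<bar>K\<bar> * lnorm nrm m (s k - l)"
        by (intro mult_right_mono abs_ge_self lnorm_ge0)
      finally show ?thesis .
    qed
    then have "norm (fst a) \<le> 0" using lim by (rule le_lim0)
    then have "a \<in> WN" using ab unfolding WN_def Wsub_def by simp
    then show ?thesis using ab unfolding M_def by blast
  qed
  have ME: "x \<in> M \<Longrightarrow> x \<in> Elev W m \<Longrightarrow> \<exists>w p. w \<in> WN \<and> p \<in> Nperp \<and> p \<in> Elev W m \<and> x = w + p" for x m
  proof -
    assume x: "x \<in> M" "x \<in> Elev W m"
    then obtain w p where wp: "w \<in> WN" "p \<in> Nperp" "x = w + p" unfolding M_def by blast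
    have "w \<in> Elev W m" using wp NEm WN_def by blast
    then have "p \<in> Elev W m" using wp x Ediff by (metis add_diff_cancel_left')
    then show ?thesis using wp by blast
  qed
  have scM: "sc_subspace W nrm M"
    unfolding sc_subspace_def
  proof (intro conjI allI impI ballI)
    show "subspace M" by (rule subM)
    show "closed M" using closed_from_lev[OF sc] Mclos by blast
    show "\<And>m s l. (\<forall>k. s k \<in> M \<inter> Elev W m) \<and> l \<in> Elev W m \<and> (\<lambda>k. lnorm nrm m (s k - l)) \<longlonglongrightarrow> 0 \<Longrightarrow> l \<in> M"
      using Mclos by blast
    fix m x and e :: real assume x: "x \<in> M \<inter> Elev W m" and e: "e > 0"
    then obtain w p where wp: "w \<in> WN" "p \<in> Nperp" "p \<in> Elev W m" "x = w + p" using ME by blast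
    obtain y where y: "y \<in> Nperp" "y \<in> (\<Inter>k. Elev W k)" "lnorm nrm m (p - y) < e"
      using Pdens[of p m e] wp e by blast
    have "w + y \<in> M" using wp y unfolding M_def by blast
    moreover have "w + y \<in> (\<Inter>k. Elev W k)" using wp(1) y(2) NE Eadd WN_def by blast
    moreover have "x - (w + y) = p - y" using wp by simp
    moreover have "lnorm nrm m (x - (w + y)) < e" using y(3) \<open>x - (w + y) = p - y\<close> by (simp only:)
    ultimately show "\<exists>y\<in>M \<inter> (\<Inter>k. Elev W k). lnorm nrm m (x - y) < e" by blast
  qed

  have NtM0: "Nt \<inter> M = {0}"
  proof
    show "{0} \<subseteq> Nt \<inter> M" using subNt subM by (simp add: subspace_0)
    show "Nt \<inter> M \<subseteq> {0}"
    proof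
      fix t assume t: "t \<in> Nt \<inter> M"
      then obtain w p where wp: "w \<in> WN" "p \<in> Nperp" "t = w + p" unfolding M_def by blast
      have "p = t - w" using wp by simp
      then have "p \<in> N" using t NtN wp(1) subN WN_def by (auto simp: subspace_diff)
      then have "p = 0" using NP0 wp(2) by blast
      then have "t \<in> Nt \<inter> (N \<inter> Wsub)" using t wp WN_def by auto
      then show "t \<in> {0}" using disj by blast
    qed
  qed

  have scC: "sc_complement W nrm Nt M"
    unfolding sc_complement_def
  proof (intro conjI allI ballI)
    show "sc_subspace W nrm Nt" by (rule scNt)
    show "sc_subspace W nrm M" by (rule scM)
    show "Nt \<inter> M = {0}" by (rule NtM0)
    fix m and x :: "(real^'n) \<times> 'w" assume x: "x \<in> Elev W m"
    then obtain a b where ab: "a \<in> N" "a \<in> Elev W m" "b \<in> Nperp" "b \<in> Elev W m" "x = a + b"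
      using decm by blast
    then obtain t w where tw: "t \<in> Nt" "w \<in> WN" "a = t + w" using decN' by blast
    have "w + b \<in> M" using tw ab unfolding M_def by blast
    moreover have "w + b \<in> Elev W m" using tw ab NEm WN_def Eadd by blast
    moreover have "t \<in> Nt \<inter> Elev W m" using tw NtE by blast
    moreover have "x = t + (w + b)" using ab tw by simp
    ultimately show "\<exists>a\<in>Nt \<inter> Elev W m. \<exists>b\<in>M \<inter> Elev W m. x = a + b" by blast
  next
    fix m
    obtain K1 where K1: "\<forall>a\<in>N \<inter> Elev W m. \<forall>b\<in>Nperp \<inter> Elev W m. lnorm nrm m a \<le> K1 * lnorm nrm m (a + b)"
      using bndNP by blast
    obtain K2 where K2: "K2 \<ge> 0" "\<And>t. t \<in> Nt \<Longrightarrow> lnorm nrm m t \<le> K2 * norm (fst t)" using F3 by blast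
    have "lnorm nrm m t \<le> (K2 * \<bar>K1\<bar>) * lnorm nrm m (t + y)" if t: "t \<in> Nt \<inter> Elev W m" and y: "y \<in> M \<inter> Elev W m" for t y
    proof -
      obtain w p where wp: "w \<in> WN" "p \<in> Nperp" "p \<in> Elev W m" "y = w + p" using ME y by blast
      have "t + w \<in> N" using t wp NtN subN WN_def by (auto simp: subspace_add)
      then have twN: "t + w \<in> N \<inter> Elev W m" using NEm by blast
      have "lnorm nrm m t \<le> K2 * norm (fst t)" using K2 t by blast
      also have "norm (fst t) = norm (fst (t + w))" using WNfst[OF wp(1)] by simp
      also have "K2 * norm (fst (t + w)) \<le> K2 * lnorm nrm m (t + w)"
        by (rule mult_left_mono[OF lnorm_fst K2(1)])
      also have "lnorm nrm m (t + w) \<le> \<bar>K1\<bar> * lnorm nrm m (t + w + p)"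
      proof -
        have "lnorm nrm m (t + w) \<le> K1 * lnorm nrm m (t + w + p)" using K1 twN wp by blast
        also have "\<dots> \<le> \<bar>K1\<bar> * lnorm nrm m (t + w + p)" by (intro mult_right_mono abs_ge_self lnorm_ge0)
        finally show ?thesis .
      qed
      then have "K2 * lnorm nrm m (t + w) \<le> K2 * (\<bar>K1\<bar> * lnorm nrm m (t + w + p))"
        using K2(1) by (rule mult_left_mono)
      also have "t + w + p = t + y" using wp by (simp add: add.assoc)
      finally show ?thesis by (simp add: mult.assoc)
    qed
    then show "\<exists>K. \<forall>a\<in>Nt \<inter> Elev W m. \<forall>b\<in>M \<inter> Elev W m. lnorm nrm m a \<le> K * lnorm nrm m (a + b)"
      by blast
  qed

  have gcM: "good_complement W nrm Nt M"
    unfolding good_complement_def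
  proof (intro conjI)
    show "sc_complement W nrm Nt M" by (rule scC)
    obtain K0 where K0: "\<forall>a\<in>N \<inter> Elev W 0. \<forall>b\<in>Nperp \<inter> Elev W 0. lnorm nrm 0 a \<le> K0 * lnorm nrm 0 (a + b)"
      using bndNP by blast
    define c' where "c' = c / (1 + \<bar>K0\<bar>)"
    have c'pos: "c' > 0" unfolding c'_def using c by simp
    have "n + m \<in> Cq \<longleftrightarrow> n \<in> Cq" if n: "n \<in> Nt" and m: "m \<in> M" and nm: "norm m \<le> c' * norm n" for n m
    proof -
      obtain w p where wp: "w \<in> WN" "p \<in> Nperp" "m = w + p" using m unfolding M_def by blast
      have "w \<in> N" using wp WN_def by blast
      then have "lnorm nrm 0 w \<le> K0 * lnorm nrm 0 (w + p)" using K0 wp Elev0 by blast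
      then have "norm w \<le> K0 * norm (w + p)" by (simp only: lnorm0[OF sc])
      also have "\<dots> \<le> \<bar>K0\<bar> * norm (w + p)" by (intro mult_right_mono abs_ge_self norm_ge_zero)
      finally have nw: "norm w \<le> \<bar>K0\<bar> * norm m" using wp by simp
      have "norm p \<le> norm m + norm w" using wp norm_triangle_ineq4[of m w] by simp
      also have "\<dots> \<le> (1 + \<bar>K0\<bar>) * norm m" using nw by (simp add: algebra_simps)
      also have "\<dots> \<le> (1 + \<bar>K0\<bar>) * (c' * norm n)" by (rule mult_left_mono[OF nm]) simp
      also have "\<dots> = c * norm n" unfolding c'_def
      proof -
        have "1 + \<bar>K0\<bar> \<noteq> 0" by (metis abs_ge_zero add_pos_nonneg less_numeral_extra(1) not_less_iff_gr_or_eq)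
        then show "(1 + \<bar>K0\<bar>) * (c / (1 + \<bar>K0\<bar>) * norm n) = c * norm n" by simp
      qed
      finally have np: "norm p \<le> c * norm n" .
      have "n + m \<in> Cq \<longleftrightarrow> n + p \<in> Cq" using WNfst[OF wp(1)] wp(3) by (intro Cq_fst) simp
      also have "\<dots> \<longleftrightarrow> n \<in> Cq" using cC[OF _ wp(2) np] n NtN by blast
      finally show ?thesis .
    qed
    then show "\<exists>c>0. \<forall>n\<in>Nt. \<forall>m\<in>M. norm m \<le> c * norm n \<longrightarrow> (n + m \<in> Cq \<longleftrightarrow> n \<in> Cq)"
      using c'pos by blast
  qed

  have opNt: "\<exists>U. openin (top_of_set Nt) U \<and> U \<noteq> {} \<and> U \<subseteq> Nt \<inter> Cq"
  proof -
    obtain U where U: "openin (top_of_set N) U" "U \<noteq> {}" "U \<subseteq> N \<inter> Cq"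
      using gpN unfolding good_position_def by blast
    obtain T where T: "open T" "U = N \<inter> T" using U(1) by (auto simp: openin_open)
    obtain x where x: "x \<in> U" using U(2) by blast
    then obtain a b where ab: "a \<in> Nt" "b \<in> WN" "x = a + b" using decN' U(3) by blast
    define T' where "T' = (\<lambda>y. y - b) ` T"
    have oT': "open T'" unfolding T'_def using T(1)
      by (rule open_translation_subtract)
    have "Nt \<inter> T' \<subseteq> Nt \<inter> Cq"
    proof
      fix z assume z: "z \<in> Nt \<inter> T'"
      then obtain y where y: "y \<in> T" "z = y - b" unfolding T'_def by blast
      have "y = z + b" using y by simp
      moreover have "z + b \<in> N" using z ab NtN subN WN_def by (auto simp: subspace_add)
      ultimately have "y \<in> U" using y T by simp
      then have "y \<in> Cq" using U by blast
      moreover have "fst y = fst z" using y WNfst[OF ab(2)] by simp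
      ultimately have "z \<in> Cq" using Cq_fst by blast
      then show "z \<in> Nt \<inter> Cq" using z by blast
    qed
    moreover have "a \<in> Nt \<inter> T'" using ab x T unfolding T'_def by (auto intro: image_eqI[of _ _ x])
    moreover have "openin (top_of_set Nt) (Nt \<inter> T')" by (rule openin_open_Int[OF oT'])
    ultimately show ?thesis by blast
  qed

  show ?thesis unfolding good_position_def M_def[symmetric] WN_def[symmetric]
    using opNt gcM by blast
qed

end
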